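(* Restrict each worker's strategy set to dropping strategies. Consider any economy $\mathcal{E}$ (as in the context) such that either (1) no market $\mathcal{M}(\theta)$, $\theta\in\Theta$, has a preference cycle, or (2) $\mathcal{E}$ satisfies the SPC*. Then, considering Bayesian Nash equilibria in which firms report truthfully and workers use dropping strategies, $\mathcal{E}$ has a unique BNE outcome, namely the one that yields in each state $\theta$ the unique stable matching (for the true preferences) of $\mathcal{M}(\theta)$.
   Context: Matching market: $\mathcal{M}=(F,W,U)$ with finite firms $F=\{f_i\}_{i\in[m]}$, finite workers $W=\{w_j\}_{j\in[n]}$, utilities $u^f_{ij}$ of firm $f_i$ from worker $w_j$ and $u^w_{ij}$ of worker $w_j$ from firm $f_i$; unmatched utility is $0$; all preferences strict; all pairs mutually acceptable. An economy is $\mathcal{E}=(F,W,\{U(\theta)\}_{\theta\in\Theta},\Theta,\Psi)$ with finite $\Theta$, full-support prior $\Psi$, market $\mathcal{M}(\theta)=(F,W,U(\theta))$ in state $\theta$; workers' utilities are state-independent, firms' may depend on $\theta$. Standing assumption: each $\mathcal{M}(\theta)$ has a unique stable matching. Game: $\theta$ drawn by $\Psi$; firms observe $\theta$; each worker knows only his own preferences; all simultaneously submit rank-ordered lists of acceptable partners; firm-proposing Deferred Acceptance is run on the reports. Firms report truthfully; a BNE is a profile where each worker's reported list maximizes his expected utility under $\Psi$ within his allowed strategy set. The outcome of a BNE is the matching produced in each state. A dropping strategy for a worker declares some (possibly no) firms unacceptable and ranks the remaining firms in their true order. A preference cycle in a market is a sequence of distinct firms $f^1,\dots,f^k$ and distinct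 workers $w^1,\dots,w^k$, $k\ge 2$, such that (indices mod $k$) each $f^t$ prefers $w^t$ to $w^{t-1}$ and each $w^t$ prefers $f^{t+1}$ to $f^t$ (the "aligned preferences condition" is the absence of such cycles). Sub-market, top-top match, SPC: a sub-market restricts to $F'\subseteq F$, $W'\subseteq W$; $(f,w)$ is a top-top match of it if each is the other's favorite in it; a market satisfies the SPC if there are orderings $f_1,\dots,f_m$, $w_1,\dots,w_n$ with $(f_i,w_i)$ a top-top match of the sub-market induced by $\{f_j,w_j\}_{j\ge i}$ for each $i\le\min(m,n)$ (order $i$). An economy satisfies the SPC if each $\mathcal{M}(\theta)$ does with possibly state-specific orderings $f_{i|\theta}$, $w_{i|\theta}$; it satisfies the SPC* if moreover, for every $\theta$, $i\le\min(m,n)$ and firm $f$: if $w_{i|\theta}$ strictly prefers $f$ to $f_{i|\theta}$, then for every state $\theta'$ there is $i'<i$ with $f=f_{i'|\theta'}$. *)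

theory Defs
  imports Complex_Main
begin

text \<open>Firms, workers and states are finite types ('f, 'w, 's), so
  F = UNIV, W = UNIV, Theta = UNIV. In a single market, uf f w is the utility of
  firm f from worker w and uw f w the utility of worker w from firm f; being
  unmatched gives 0. A matching is a map from workers to an optional firm in which
  no firm is assigned to two workers.\<close>

definition wval :: "('f \<Rightarrow> 'w \<Rightarrow> real) \<Rightarrow> 'w \<Rightarrow> 'f option \<Rightarrow> real" where
  "wval uw w m = (case m of None \<Rightarrow> 0 | Some f \<Rightarrow> uw f w)"

definition is_matching :: "('w \<Rightarrow> 'f option) \<Rightarrow> bool" where
  "is_matching \<mu> \<longleftrightarrow> (\<forall>w w' f. \<mu> w = Some f \<and> \<mu> w' = Some f \<longrightarrow> w = w')"

definition fval :: "('f \<Rightarrow> 'w \<Rightarrow> real) \<Rightarrow> ('w \<Rightarrow> 'f option) \<Rightarrow> 'f \<Rightarrow> real" where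
  "fval uf \<mu> f = (if \<exists>w. \<mu> w = Some f then uf f (THE w. \<mu> w = Some f) else 0)"

definition stable_matching ::
  "('f \<Rightarrow> 'w \<Rightarrow> real) \<Rightarrow> ('f \<Rightarrow> 'w \<Rightarrow> real) \<Rightarrow> ('w \<Rightarrow> 'f option) \<Rightarrow> bool" where
  "stable_matching uf uw \<mu> \<longleftrightarrow>
     is_matching \<mu>
   \<and> (\<forall>w f. \<mu> w = Some f \<longrightarrow> 0 < uw f w \<and> 0 < uf f w)
   \<and> \<not> (\<exists>f w. wval uw w (\<mu> w) < uw f w \<and> fval uf \<mu> f < uf f w)"

text \<open>Firm-proposing deferred acceptance (simultaneous Gale--Shapley rounds).
  Firms report their true rankings (all workers acceptable); worker w reports the
  dropping strategy D w: the firms in D w are acceptable, ranked in true order.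
  The state of the algorithm is the set rej f of workers that have rejected f.\<close>

definition da_prop :: "('f \<Rightarrow> 'w \<Rightarrow> real) \<Rightarrow> ('f \<Rightarrow> 'w set) \<Rightarrow> 'f \<Rightarrow> 'w option" where
  "da_prop uf rej f =
     (if (UNIV - rej f) = {} then None else Some (ARG_MAX (uf f) w. w \<notin> rej f))"

definition da_accepts ::
  "('f \<Rightarrow> 'w \<Rightarrow> real) \<Rightarrow> ('w \<Rightarrow> 'f set) \<Rightarrow> ('f \<Rightarrow> 'w option) \<Rightarrow> 'f \<Rightarrow> 'w \<Rightarrow> bool" where
  "da_accepts uw D p f w \<longleftrightarrow>
     p f = Some w \<and> f \<in> D w \<and> (\<forall>f'. p f' = Some w \<and> f' \<in> D w \<longrightarrow> uw f' w \<le> uw f w)"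

definition da_step ::
  "('f \<Rightarrow> 'w \<Rightarrow> real) \<Rightarrow> ('f \<Rightarrow> 'w \<Rightarrow> real) \<Rightarrow> ('w \<Rightarrow> 'f set) \<Rightarrow> ('f \<Rightarrow> 'w set) \<Rightarrow> ('f \<Rightarrow> 'w set)" where
  "da_step uf uw D rej = (\<lambda>f. rej f \<union>
     (case da_prop uf rej f of None \<Rightarrow> {}
      | Some w \<Rightarrow> (if da_accepts uw D (da_prop uf rej) f w then {} else {w})))"

text \<open>Every non-terminal round adds a rejection, so after |F|*|W| rounds the
  algorithm has terminated.\<close>

definition da_rej ::
  "('f::finite \<Rightarrow> 'w::finite \<Rightarrow> real) \<Rightarrow> ('f \<Rightarrow> 'w \<Rightarrow> real) \<Rightarrow> ('w \<Rightarrow> 'f set) \<Rightarrow> ('f \<Rightarrow> 'w set)" where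
  "da_rej uf uw D = (da_step uf uw D ^^ (card (UNIV :: 'f set) * card (UNIV :: 'w set))) (\<lambda>_. {})"

definition da ::
  "('f::finite \<Rightarrow> 'w::finite \<Rightarrow> real) \<Rightarrow> ('f \<Rightarrow> 'w \<Rightarrow> real) \<Rightarrow> ('w \<Rightarrow> 'f set) \<Rightarrow> ('w \<Rightarrow> 'f option)" where
  "da uf uw D = (\<lambda>w. let p = da_prop uf (da_rej uf uw D) in
      if \<exists>f. da_accepts uw D p f w then Some (THE f. da_accepts uw D p f w) else None)"

definition economy ::
  "('s::finite \<Rightarrow> real) \<Rightarrow> ('s \<Rightarrow> 'f::finite \<Rightarrow> 'w::finite \<Rightarrow> real) \<Rightarrow> ('f \<Rightarrow> 'w \<Rightarrow> real) \<Rightarrow> bool" where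
  "economy \<Psi> uf uw \<longleftrightarrow>
     (\<forall>\<theta>. 0 < \<Psi> \<theta>) \<and> (\<Sum>\<theta>\<in>UNIV. \<Psi> \<theta>) = 1
   \<and> (\<forall>\<theta> f. inj (uf \<theta> f)) \<and> (\<forall>w. inj (\<lambda>f. uw f w))
   \<and> (\<forall>\<theta> f w. 0 < uf \<theta> f w) \<and> (\<forall>f w. 0 < uw f w)
   \<and> (\<forall>\<theta>. \<exists>!\<mu>. stable_matching (uf \<theta>) uw \<mu>)"

definition exp_util ::
  "('s::finite \<Rightarrow> real) \<Rightarrow> ('s \<Rightarrow> 'f::finite \<Rightarrow> 'w::finite \<Rightarrow> real) \<Rightarrow> ('f \<Rightarrow> 'w \<Rightarrow> real)
     \<Rightarrow> ('w \<Rightarrow> 'f set) \<Rightarrow> 'w \<Rightarrow> real" where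
  "exp_util \<Psi> uf uw D w = (\<Sum>\<theta>\<in>UNIV. \<Psi> \<theta> * wval uw w (da (uf \<theta>) uw D w))"

text \<open>BNE when each worker's strategy set is the set of dropping strategies,
  i.e. the choice of a set of acceptable firms (independent of the state, which
  workers do not observe).\<close>

definition BNE_dropping ::
  "('s::finite \<Rightarrow> real) \<Rightarrow> ('s \<Rightarrow> 'f::finite \<Rightarrow> 'w::finite \<Rightarrow> real) \<Rightarrow> ('f \<Rightarrow> 'w \<Rightarrow> real)
     \<Rightarrow> ('w \<Rightarrow> 'f set) \<Rightarrow> bool" where
  "BNE_dropping \<Psi> uf uw D \<longleftrightarrow>
     (\<forall>w S. exp_util \<Psi> uf uw (D(w := S)) w \<le> exp_util \<Psi> uf uw D w)"

text \<open>Preference cycle (indices 0..k-1, taken mod k).\<close>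

definition pref_cycle ::
  "('f \<Rightarrow> 'w \<Rightarrow> real) \<Rightarrow> ('f \<Rightarrow> 'w \<Rightarrow> real) \<Rightarrow> nat \<Rightarrow> (nat \<Rightarrow> 'f) \<Rightarrow> (nat \<Rightarrow> 'w) \<Rightarrow> bool" where
  "pref_cycle uf uw k fs ws \<longleftrightarrow>
     2 \<le> k \<and> inj_on fs {..<k} \<and> inj_on ws {..<k}
   \<and> (\<forall>t<k. uf (fs t) (ws ((t + k - 1) mod k)) < uf (fs t) (ws t)
          \<and> uw (fs t) (ws t) < uw (fs ((t + 1) mod k)) (ws t))"

definition no_pref_cycle :: "('f \<Rightarrow> 'w \<Rightarrow> real) \<Rightarrow> ('f \<Rightarrow> 'w \<Rightarrow> real) \<Rightarrow> bool" where
  "no_pref_cycle uf uw \<longleftrightarrow> \<not> (\<exists>k fs ws. pref_cycle uf uw k fs ws)"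

text \<open>SPC orderings (0-based): fo enumerates F, wo enumerates W, and for each
  i < min m n, (fo i, wo i) is a top-top match of the sub-market
  {fo j | i \<le> j < m}, {wo j | i \<le> j < n}.\<close>

definition SPC_ordering ::
  "('f::finite \<Rightarrow> 'w::finite \<Rightarrow> real) \<Rightarrow> ('f \<Rightarrow> 'w \<Rightarrow> real) \<Rightarrow> (nat \<Rightarrow> 'f) \<Rightarrow> (nat \<Rightarrow> 'w) \<Rightarrow> bool" where
  "SPC_ordering uf uw fo wo \<longleftrightarrow>
     bij_betw fo {..<card (UNIV :: 'f set)} UNIV \<and> bij_betw wo {..<card (UNIV :: 'w set)} UNIV
   \<and> (\<forall>i < min (card (UNIV :: 'f set)) (card (UNIV :: 'w set)).
        (\<forall>j. i \<le> j \<and> j < card (UNIV :: 'w set) \<longrightarrow> uf (fo i) (wo j) \<le> uf (fo i) (wo i))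
      \<and> (\<forall>j. i \<le> j \<and> j < card (UNIV :: 'f set) \<longrightarrow> uw (fo j) (wo i) \<le> uw (fo i) (wo i)))"

definition SPC_star ::
  "('s \<Rightarrow> 'f::finite \<Rightarrow> 'w::finite \<Rightarrow> real) \<Rightarrow> ('f \<Rightarrow> 'w \<Rightarrow> real) \<Rightarrow> bool" where
  "SPC_star uf uw \<longleftrightarrow> (\<exists>fo wo.
     (\<forall>\<theta>. SPC_ordering (uf \<theta>) uw (fo \<theta>) (wo \<theta>))
   \<and> (\<forall>\<theta> i f. i < min (card (UNIV :: 'f set)) (card (UNIV :: 'w set)) \<and> uw (fo \<theta> i) (wo \<theta> i) < uw f (wo \<theta> i)
        \<longrightarrow> (\<forall>\<theta>'. \<exists>i'<i. f = fo \<theta>' i')))"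

end

theory Submission
  imports Defs
begin

lemma finite_has_max:
  fixes g :: "'a::finite \<Rightarrow> real"
  assumes "P x"
  shows "\<exists>y. P y \<and> (\<forall>z. P z \<longrightarrow> g z \<le> g y)"
proof -
  let ?S = "g ` {x. P x}"
  have fin: "finite ?S" by simp
  have ne: "?S \<noteq> {}" using assms by auto
  have "Max ?S \<in> ?S" using Max_in[OF fin ne] .
  then obtain y where y: "P y" "g y = Max ?S" by auto
  show ?thesis using y fin by (auto intro!: exI[of _ y])
qed

lemma argmax_props:
  fixes g :: "'a::finite \<Rightarrow> real"
  assumes "P x"
  shows "P (arg_max g P) \<and> (\<forall>z. P z \<longrightarrow> g z \<le> g (arg_max g P))"
proof -
  obtain y where y: "P y" "\<forall>z. P z \<longrightarrow> g z \<le> g y" using finite_has_max[of P x g] assms by blast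
  show ?thesis
    by (rule arg_maxI[of P y g]) (use y in \<open>auto simp: not_less\<close>)
qed

locale mkt =
  fixes uf :: "'f::finite \<Rightarrow> 'w::finite \<Rightarrow> real" and uw :: "'f \<Rightarrow> 'w \<Rightarrow> real"
  assumes inj_f: "\<And>f. inj (uf f)" and inj_w: "\<And>w. inj (\<lambda>f. uw f w)"
    and pos_f: "\<And>f w. 0 < uf f w" and pos_w: "\<And>f w. 0 < uw f w"
begin

lemma uf_eq: "uf f a = uf f b \<longleftrightarrow> a = b" using inj_f[of f] by (auto dest: injD)
lemma uw_eq: "uw a w = uw b w \<longleftrightarrow> a = b" using inj_w[of w] by (auto dest: injD)

lemma prop_some: "da_prop uf rej f = Some w \<Longrightarrow> w \<notin> rej f \<and> (\<forall>w'. w' \<notin> rej f \<longrightarrow> uf f w' \<le> uf f w)"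
  unfolding da_prop_def using argmax_props[of "\<lambda>w. w \<notin> rej f" _ "uf f"]
  by (auto split: if_splits)

lemma prop_ex: "w \<notin> rej f \<Longrightarrow> \<exists>w0. da_prop uf rej f = Some w0"
  unfolding da_prop_def by auto

lemma prop_none: "da_prop uf rej f = None \<Longrightarrow> w \<in> rej f"
  unfolding da_prop_def by (auto split: if_splits)


definition rk :: "('w \<Rightarrow> 'f set) \<Rightarrow> nat \<Rightarrow> 'f \<Rightarrow> 'w set" where
  "rk D k = (da_step uf uw D ^^ k) (\<lambda>_. {})"

lemma step_sup: "r f \<subseteq> da_step uf uw D r f"
  unfolding da_step_def by auto

lemma step_acc: "da_accepts uw D (da_prop uf r) f w \<Longrightarrow> da_step uf uw D r f = r f"
  unfolding da_step_def da_accepts_def by auto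

lemma step_rej: "da_prop uf r f = Some w \<Longrightarrow> \<not> da_accepts uw D (da_prop uf r) f w
   \<Longrightarrow> da_step uf uw D r f = insert w (r f)"
  unfolding da_step_def by auto

lemma step_cases: "da_step uf uw D r f = r f \<or> (\<exists>w. da_prop uf r f = Some w \<and> \<not> da_accepts uw D (da_prop uf r) f w
   \<and> da_step uf uw D r f = insert w (r f))"
  unfolding da_step_def by (auto split: option.splits)

lemma prop_same: "r' f = r f \<Longrightarrow> da_prop uf r' f = da_prop uf r f"
  unfolding da_prop_def by simp

definition sz :: "('f \<Rightarrow> 'w set) \<Rightarrow> nat" where
  "sz r = (\<Sum>f\<in>UNIV. card (r f))"

lemma sz_le: "sz r \<le> card (UNIV :: 'f set) * card (UNIV :: 'w set)"
proof -
  have "sz r \<le> (\<Sum>f\<in>(UNIV::'f set). card (UNIV :: 'w set))"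
    unfolding sz_def by (rule sum_mono) (simp add: card_mono)
  then show ?thesis by simp
qed

lemma sz_less: assumes "\<And>f. r f \<subseteq> r' f" "r \<noteq> r'" shows "sz r < sz r'"
proof -
  obtain f0 where "r f0 \<noteq> r' f0" using assms(2) by blast
  then have "r f0 \<subset> r' f0" using assms(1) by blast
  then have "card (r f0) < card (r' f0)" by (simp add: psubset_card_mono)
  then show ?thesis unfolding sz_def
    by (intro sum_strict_mono_ex1) (auto intro: card_mono[OF _ assms(1)])
qed

lemma rk_Suc: "rk D (Suc k) = da_step uf uw D (rk D k)"
  unfolding rk_def by simp

lemma fix_prop: "rk D (Suc j) = rk D j \<Longrightarrow> j \<le> k \<Longrightarrow> rk D (Suc k) = rk D k"
proof (induction k)
  case 0 then show ?case by simp
next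
  case (Suc k)
  show ?case
  proof (cases "j = Suc k")
    case True then show ?thesis using Suc by simp
  next
    case False
    then have "rk D (Suc k) = rk D k" using Suc by simp
    then show ?thesis by (simp add: rk_Suc)
  qed
qed

lemma rk_Q: "(\<exists>j<k. rk D (Suc j) = rk D j) \<or> k \<le> sz (rk D k)"
proof (induction k)
  case 0 then show ?case by simp
next
  case (Suc k)
  show ?case
  proof (cases "\<exists>j<k. rk D (Suc j) = rk D j")
    case True then show ?thesis using less_Suc_eq by blast
  next
    case False
    then have k: "k \<le> sz (rk D k)" using Suc by blast
    show ?thesis
    proof (cases "rk D (Suc k) = rk D k")
      case True then show ?thesis by blast
    next
      case False
      have "sz (rk D k) < sz (rk D (Suc k))"
        by (rule sz_less) (use False in \<open>auto simp: rk_Suc step_sup\<close>)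
      then show ?thesis using k by simp
    qed
  qed
qed

lemma rej_fix: "da_step uf uw D (da_rej uf uw D) = da_rej uf uw D"
proof -
  let ?N = "card (UNIV :: 'f set) * card (UNIV :: 'w set)"
  have "\<exists>j<Suc ?N. rk D (Suc j) = rk D j"
    using rk_Q[of "Suc ?N" D] sz_le[of "rk D (Suc ?N)"] by auto
  then obtain j where "j \<le> ?N" "rk D (Suc j) = rk D j" using less_Suc_eq_le by blast
  then have "rk D (Suc ?N) = rk D ?N" using fix_prop by blast
  then show ?thesis unfolding da_rej_def by (simp add: rk_Suc[symmetric] rk_def[symmetric])
qed

lemma best_acc: assumes "p f = Some w" "f \<in> D w"
  shows "\<exists>f'. da_accepts uw D p f' w \<and> uw f w \<le> uw f' w"
proof -
  obtain y where y: "p y = Some w \<and> y \<in> D w" "\<forall>z. p z = Some w \<and> z \<in> D w \<longrightarrow> uw z w \<le> uw y w"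
    using finite_has_max[of "\<lambda>f. p f = Some w \<and> f \<in> D w" f "\<lambda>f. uw f w"] assms by blast
  then show ?thesis using assms unfolding da_accepts_def by blast
qed

definition good :: "('w \<Rightarrow> 'f set) \<Rightarrow> ('f \<Rightarrow> 'w set) \<Rightarrow> bool" where
  "good D r \<longleftrightarrow> (\<forall>f w. w \<in> r f \<and> f \<in> D w \<longrightarrow>
     (\<exists>f'. da_prop uf r f' = Some w \<and> f' \<in> D w \<and> uw f w < uw f' w))"

lemma good_step: assumes "good D r" shows "good D (da_step uf uw D r)"
  unfolding good_def
proof (intro allI impI)
  fix f w assume a: "w \<in> da_step uf uw D r f \<and> f \<in> D w"
  let ?p = "da_prop uf r"
  have "\<exists>f'. ?p f' = Some w \<and> f' \<in> D w \<and> uw f w < uw f' w"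
  proof (cases "w \<in> r f")
    case True then show ?thesis using assms a unfolding good_def by blast
  next
    case False
    then have "?p f = Some w \<and> \<not> da_accepts uw D ?p f w"
      using a step_cases[of D r f] by auto
    then show ?thesis using a unfolding da_accepts_def by force
  qed
  then obtain f' where f': "?p f' = Some w" "f' \<in> D w" "uw f w < uw f' w" by blast
  obtain fs where fs: "da_accepts uw D ?p fs w" "uw f' w \<le> uw fs w" using best_acc[of ?p f' w D] f'(1,2) by blast
  have "da_step uf uw D r fs = r fs" using step_acc[OF fs(1)] .
  then have "da_prop uf (da_step uf uw D r) fs = Some w"
    using prop_same fs(1) unfolding da_accepts_def by metis
  then show "\<exists>f'. da_prop uf (da_step uf uw D r) f' = Some w \<and> f' \<in> D w \<and> uw f w < uw f' w"
    using fs f' unfolding da_accepts_def by force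
qed

lemma good_rk: "good D (rk D k)"
proof (induction k)
  case 0 then show ?case by (simp add: good_def rk_def)
next
  case (Suc k) then show ?case by (simp add: rk_Suc good_step)
qed

lemma good_rej: "good D (da_rej uf uw D)"
  using good_rk unfolding da_rej_def rk_def by simp

end

definition stab :: "('f \<Rightarrow> 'w \<Rightarrow> real) \<Rightarrow> ('f \<Rightarrow> 'w \<Rightarrow> real) \<Rightarrow> ('w \<Rightarrow> 'f set) \<Rightarrow> ('w \<Rightarrow> 'f option) \<Rightarrow> bool" where
  "stab uf uw D \<mu> \<longleftrightarrow> is_matching \<mu> \<and> (\<forall>w f. \<mu> w = Some f \<longrightarrow> f \<in> D w)
     \<and> (\<forall>f w. f \<in> D w \<longrightarrow> \<not> (wval uw w (\<mu> w) < uw f w \<and> fval uf \<mu> f < uf f w))"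

lemma fval_some: "is_matching \<mu> \<Longrightarrow> \<mu> w = Some f \<Longrightarrow> fval uf \<mu> f = uf f w"
proof -
  assume a: "is_matching \<mu>" "\<mu> w = Some f"
  have "(THE w. \<mu> w = Some f) = w" using a unfolding is_matching_def by (auto intro!: the_equality)
  then show ?thesis using a unfolding fval_def by auto
qed

lemma fval_none: "\<forall>w. \<mu> w \<noteq> Some f \<Longrightarrow> fval uf \<mu> f = 0"
  unfolding fval_def by auto


lemma wval_simps[simp]: "wval uw w None = 0" "wval uw w (Some f) = uw f w"
  unfolding wval_def by auto

context mkt begin

lemma fix_acc: assumes "da_prop uf (da_rej uf uw D) f = Some w"
  shows "da_accepts uw D (da_prop uf (da_rej uf uw D)) f w"
proof (rule ccontr)
  let ?R = "da_rej uf uw D"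
  assume "\<not> ?thesis"
  then have "da_step uf uw D ?R f = insert w (?R f)" using step_rej assms by blast
  then have "w \<in> ?R f" using rej_fix by (metis insertI1)
  then show False using prop_some[OF assms] by blast
qed

lemma acc_unique: "da_accepts uw D p f1 w \<Longrightarrow> da_accepts uw D p f2 w \<Longrightarrow> f1 = f2"
  unfolding da_accepts_def using uw_eq by (meson order_antisym)

lemma da_Some: "da uf uw D w = Some f \<longleftrightarrow> da_accepts uw D (da_prop uf (da_rej uf uw D)) f w"
proof -
  let ?p = "da_prop uf (da_rej uf uw D)"
  show ?thesis
  proof
    assume a: "da uf uw D w = Some f"
    then have ex: "\<exists>f. da_accepts uw D ?p f w" unfolding da_def by (auto split: if_splits simp: Let_def)
    then have "f = (THE f. da_accepts uw D ?p f w)" using a unfolding da_def by (auto simp: Let_def)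
    then show "da_accepts uw D ?p f w" using ex acc_unique by (metis (mono_tags, lifting) theI)
  next
    assume a: "da_accepts uw D ?p f w"
    then have "(THE f. da_accepts uw D ?p f w) = f" using acc_unique by blast
    then show "da uf uw D w = Some f" using a unfolding da_def by (auto simp: Let_def)
  qed
qed

lemma da_matching: "is_matching (da uf uw D)"
  unfolding is_matching_def da_Some da_accepts_def by auto

lemma da_acc: "da uf uw D w = Some f \<Longrightarrow> f \<in> D w"
  unfolding da_Some da_accepts_def by auto

lemma da_stab: "stab uf uw D (da uf uw D)"
proof -
  let ?R = "da_rej uf uw D"
  let ?p = "da_prop uf ?R"
  let ?\<mu> = "da uf uw D"
  have nb: "\<not> (wval uw w (?\<mu> w) < uw f w \<and> fval uf ?\<mu> f < uf f w)" if fD: "f \<in> D w" for f w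
  proof (cases "w \<in> ?R f")
    case True
    then obtain f' where f': "?p f' = Some w" "f' \<in> D w" "uw f w < uw f' w"
      using good_rej[of D] fD unfolding good_def by blast
    obtain fs where fs: "da_accepts uw D ?p fs w" "uw f' w \<le> uw fs w" using best_acc[of ?p f' w D] f' by blast
    then have "?\<mu> w = Some fs" using da_Some by blast
    then show ?thesis using f' fs by auto
  next
    case False
    then obtain w0 where w0: "?p f = Some w0" using prop_ex by blast
    then have "uf f w \<le> uf f w0" using prop_some False by blast
    moreover have "?\<mu> w0 = Some f" using fix_acc[OF w0] da_Some by blast
    ultimately show ?thesis using fval_some[OF da_matching] by fastforce
  qed
  show ?thesis unfolding stab_def using da_matching da_acc nb by blast
qed

definition nostab :: "('w \<Rightarrow> 'f option) \<Rightarrow> ('f \<Rightarrow> 'w set) \<Rightarrow> bool" where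
  "nostab \<sigma> r \<longleftrightarrow> (\<forall>f w. w \<in> r f \<longrightarrow> \<sigma> w \<noteq> Some f)"

lemma nostab_step: assumes st: "stab uf uw D \<sigma>" and ns: "nostab \<sigma> r"
  shows "nostab \<sigma> (da_step uf uw D r)"
  unfolding nostab_def
proof (intro allI impI notI)
  fix f w assume a: "w \<in> da_step uf uw D r f" and s: "\<sigma> w = Some f"
  let ?p = "da_prop uf r"
  have "w \<notin> r f" using ns s unfolding nostab_def by blast
  then have pf: "?p f = Some w" and na: "\<not> da_accepts uw D ?p f w"
    using a step_cases[of D r f] by auto
  have fD: "f \<in> D w" using st s unfolding stab_def by blast
  obtain f'' where f'': "?p f'' = Some w" "f'' \<in> D w" "uw f w < uw f'' w"
    using na pf fD unfolding da_accepts_def by force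
  have m: "is_matching \<sigma>" using st unfolding stab_def by blast
  have "fval uf \<sigma> f'' < uf f'' w"
  proof (cases "\<exists>w'. \<sigma> w' = Some f''")
    case True
    then obtain w' where w': "\<sigma> w' = Some f''" by blast
    have "w' \<noteq> w" using w' s f'' by auto
    moreover have "w' \<notin> r f''" using ns w' unfolding nostab_def by blast
    ultimately have "uf f'' w' < uf f'' w" using prop_some[OF f''(1)] uf_eq by (meson order_le_less)
    then show ?thesis using fval_some[OF m w'] by simp
  next
    case False then show ?thesis using fval_none[of \<sigma> f''] pos_f by auto
  qed
  moreover have "wval uw w (\<sigma> w) < uw f'' w" using s f'' by simp
  ultimately show False using st f''(2) unfolding stab_def by blast
qed

lemma nostab_rej: assumes "stab uf uw D \<sigma>" shows "nostab \<sigma> (da_rej uf uw D)"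
proof -
  have "nostab \<sigma> (rk D k)" for k
  proof (induction k)
    case 0 then show ?case by (simp add: nostab_def rk_def)
  next
    case (Suc k) then show ?case by (simp add: rk_Suc nostab_step[OF assms])
  qed
  then show ?thesis unfolding da_rej_def rk_def by simp
qed

lemma fval_nonneg: "0 \<le> fval uf \<mu> f"
  unfolding fval_def using pos_f by (auto intro: less_imp_le)

lemma wval_nonneg: "0 \<le> wval uw w m"
  unfolding wval_def using pos_w by (auto split: option.splits intro: less_imp_le)

lemma firm_opt: assumes st: "stab uf uw D \<sigma>"
  shows "fval uf \<sigma> f \<le> fval uf (da uf uw D) f"
proof (cases "\<exists>w. \<sigma> w = Some f")
  case True
  let ?R = "da_rej uf uw D"
  from True obtain w where w: "\<sigma> w = Some f" by blast
  have "w \<notin> ?R f" using nostab_rej[OF st] w unfolding nostab_def by blast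
  then obtain w0 where w0: "da_prop uf ?R f = Some w0" using prop_ex by blast
  have "uf f w \<le> uf f w0" using prop_some[OF w0] \<open>w \<notin> ?R f\<close> by blast
  moreover have "da uf uw D w0 = Some f" using fix_acc[OF w0] da_Some by blast
  moreover have "is_matching \<sigma>" using st unfolding stab_def by blast
  ultimately show ?thesis using fval_some[OF da_matching] fval_some w by metis
next
  case False then show ?thesis using fval_none[of \<sigma> f] fval_nonneg by simp
qed

lemma worker_pess: assumes st: "stab uf uw D \<sigma>"
  shows "wval uw w (da uf uw D w) \<le> wval uw w (\<sigma> w)"
proof (cases "da uf uw D w")
  case None then show ?thesis using wval_nonneg by simp
next
  case (Some f)
  show ?thesis
  proof (rule ccontr)
    assume lt: "\<not> ?thesis"
    then have lt': "wval uw w (\<sigma> w) < uw f w" using Some by simp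
    have fD: "f \<in> D w" using da_acc Some by blast
    have fo: "fval uf \<sigma> f \<le> uf f w" using firm_opt[OF st, of f] fval_some[OF da_matching Some] by simp
    have "fval uf \<sigma> f < uf f w"
    proof (cases "\<exists>w'. \<sigma> w' = Some f")
      case True
      then obtain w' where w': "\<sigma> w' = Some f" by blast
      have "w' \<noteq> w" using w' lt' by auto
      then have "uf f w' \<noteq> uf f w" using uf_eq by blast
      moreover have "is_matching \<sigma>" using st unfolding stab_def by blast
      ultimately show ?thesis using fo fval_some w' by fastforce
    next
      case False then show ?thesis using fval_none[of \<sigma> f] pos_f by auto
    qed
    then show False using st fD lt' unfolding stab_def by blast
  qed
qed

end

lemma card_match: assumes "is_matching \<sigma>"
  shows "card {w. \<sigma> w \<noteq> None} = card {f. \<exists>w. \<sigma> w = Some f}"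
proof -
  have inj: "inj_on (\<lambda>w. the (\<sigma> w)) {w. \<sigma> w \<noteq> None}"
  proof (rule inj_onI)
    fix a b assume "a \<in> {w. \<sigma> w \<noteq> None}" "b \<in> {w. \<sigma> w \<noteq> None}" "the (\<sigma> a) = the (\<sigma> b)"
    then have "\<sigma> a = Some (the (\<sigma> a))" "\<sigma> b = Some (the (\<sigma> a))" by auto
    then show "a = b" using assms unfolding is_matching_def by blast
  qed
  have "(\<lambda>w. the (\<sigma> w)) ` {w. \<sigma> w \<noteq> None} = {f. \<exists>w. \<sigma> w = Some f}"
  proof
    show "(\<lambda>w. the (\<sigma> w)) ` {w. \<sigma> w \<noteq> None} \<subseteq> {f. \<exists>w. \<sigma> w = Some f}" by auto
    show "{f. \<exists>w. \<sigma> w = Some f} \<subseteq> (\<lambda>w. the (\<sigma> w)) ` {w. \<sigma> w \<noteq> None}"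
    proof
      fix f assume "f \<in> {f. \<exists>w. \<sigma> w = Some f}"
      then obtain w where "\<sigma> w = Some f" by auto
      then show "f \<in> (\<lambda>w. the (\<sigma> w)) ` {w. \<sigma> w \<noteq> None}" by (auto intro!: image_eqI[of _ _ w])
    qed
  qed
  then show ?thesis using card_image[OF inj] by simp
qed

lemma stab_sub: "stab uf uw A \<sigma> \<Longrightarrow> (\<And>w. B w \<subseteq> A w) \<Longrightarrow> (\<And>w f. \<sigma> w = Some f \<Longrightarrow> f \<in> B w)
   \<Longrightarrow> stab uf uw B \<sigma>"
  unfolding stab_def by blast

context mkt begin

lemma rural: assumes s1: "stab uf uw A \<sigma>"
  shows "{w. \<sigma> w \<noteq> None} = {w. da uf uw A w \<noteq> None}"
proof -
  let ?\<tau> = "da uf uw A"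
  have m: "is_matching \<sigma>" using s1 unfolding stab_def by blast
  have sub1: "{w. ?\<tau> w \<noteq> None} \<subseteq> {w. \<sigma> w \<noteq> None}"
  proof
    fix w assume "w \<in> {w. ?\<tau> w \<noteq> None}"
    then obtain f where "?\<tau> w = Some f" by auto
    then have "uw f w \<le> wval uw w (\<sigma> w)" using worker_pess[OF s1, of w] by simp
    then show "w \<in> {w. \<sigma> w \<noteq> None}" using pos_w[of f w] by (cases "\<sigma> w") auto
  qed
  have sub2: "{f. \<exists>w. \<sigma> w = Some f} \<subseteq> {f. \<exists>w. ?\<tau> w = Some f}"
  proof
    fix f assume "f \<in> {f. \<exists>w. \<sigma> w = Some f}"
    then obtain w where w: "\<sigma> w = Some f" by auto
    then have "0 < fval uf \<sigma> f" using fval_some[OF m w] pos_f by simp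
    then have "0 < fval uf ?\<tau> f" using firm_opt[OF s1, of f] by simp
    then show "f \<in> {f. \<exists>w. ?\<tau> w = Some f}" using fval_none[of ?\<tau> f] by force
  qed
  have "card {w. ?\<tau> w \<noteq> None} \<le> card {w. \<sigma> w \<noteq> None}" using sub1 by (simp add: card_mono)
  moreover have "card {w. \<sigma> w \<noteq> None} \<le> card {w. ?\<tau> w \<noteq> None}"
    using card_match[OF m] card_match[OF da_matching, of A] sub2 by (simp add: card_mono)
  ultimately have "card {w. ?\<tau> w \<noteq> None} = card {w. \<sigma> w \<noteq> None}" by (rule antisym)
  then show ?thesis using card_subset_eq[OF finite sub1] by simp
qed

lemma rural2: "stab uf uw A \<sigma>1 \<Longrightarrow> stab uf uw A \<sigma>2 \<Longrightarrow> \<sigma>1 w = None \<longleftrightarrow> \<sigma>2 w = None"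
  using rural[of A \<sigma>1] rural[of A \<sigma>2] by (metis (mono_tags, lifting) mem_Collect_eq)

lemma trunc_lemma:
  assumes uniq: "\<And>\<sigma>1 \<sigma>2. stab uf uw (D(w:=UNIV)) \<sigma>1 \<Longrightarrow> stab uf uw (D(w:=UNIV)) \<sigma>2 \<Longrightarrow> \<sigma>1 = \<sigma>2"
  shows "wval uw w (da uf uw (D(w:=S)) w) \<le> wval uw w (da uf uw (D(w:=UNIV)) w)"
proof (cases "da uf uw (D(w:=S)) w")
  case None then show ?thesis using wval_nonneg by simp
next
  case (Some h)
  let ?\<nu> = "da uf uw (D(w:=S))"
  define T where "T = {g. uw h w \<le> uw g w}"
  define R where "R = S \<inter> T"
  let ?\<sigma> = "da uf uw (D(w:=T))"
  have s\<sigma>: "stab uf uw (D(w:=T)) ?\<sigma>" by (rule da_stab)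
  show ?thesis
  proof (cases "?\<sigma> w")
    case (Some g)
    have gT: "g \<in> T" using da_acc[OF Some] by simp
    have "stab uf uw (D(w:=UNIV)) ?\<sigma>"
      unfolding stab_def
    proof (intro conjI allI impI)
      show "is_matching ?\<sigma>" using s\<sigma> unfolding stab_def by blast
      fix w' f assume a: "?\<sigma> w' = Some f" then show "f \<in> (D(w := UNIV)) w'"
        using da_acc[OF a] by (cases "w' = w") auto
    next
      fix f w' assume fD: "f \<in> (D(w := UNIV)) w'"
      show "\<not> (wval uw w' (?\<sigma> w') < uw f w' \<and> fval uf ?\<sigma> f < uf f w')"
      proof (cases "w' = w")
        case True
        show ?thesis
        proof (cases "f \<in> T")
          case True then show ?thesis using s\<sigma> \<open>w' = w\<close> unfolding stab_def by auto
        next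
          case False
          then have "uw f w < uw h w" unfolding T_def by simp
          also have "\<dots> \<le> uw g w" using gT unfolding T_def by simp
          finally show ?thesis using Some \<open>w' = w\<close> by simp
        qed
      next
        case False then show ?thesis using s\<sigma> fD unfolding stab_def by (metis fun_upd_other)
      qed
    qed
    then have "?\<sigma> = da uf uw (D(w:=UNIV))" using uniq da_stab by blast
    then have "da uf uw (D(w:=UNIV)) w = Some g" using Some by simp
    then show ?thesis using \<open>?\<nu> w = Some h\<close> gT unfolding T_def by simp
  next
    case None
    have "stab uf uw (D(w:=R)) ?\<sigma>"
    proof (rule stab_sub[OF s\<sigma>])
      fix w' show "(D(w:=R)) w' \<subseteq> (D(w:=T)) w'" by (simp add: R_def)
    next
      fix w' f assume a: "?\<sigma> w' = Some f"
      then have "w' \<noteq> w" using None by auto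
      then show "f \<in> (D(w:=R)) w'" using da_acc[OF a] by simp
    qed
    moreover have "stab uf uw (D(w:=R)) ?\<nu>"
    proof (rule stab_sub[OF da_stab])
      fix w' show "(D(w:=R)) w' \<subseteq> (D(w:=S)) w'" by (simp add: R_def)
    next
      fix w' f assume a: "?\<nu> w' = Some f"
      show "f \<in> (D(w:=R)) w'"
      proof (cases "w' = w")
        case True
        then have "f = h" using a \<open>?\<nu> w = Some h\<close> by simp
        moreover have "h \<in> S" using da_acc[OF \<open>?\<nu> w = Some h\<close>] by simp
        ultimately show ?thesis using True by (simp add: R_def T_def)
      next
        case False then show ?thesis using da_acc[OF a] by simp
      qed
    qed
    ultimately have False using rural2 None \<open>?\<nu> w = Some h\<close> by (metis option.distinct(1))
    then show ?thesis ..
  qed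
qed

end

context mkt begin

lemma cyc_half:
  assumes nc: "no_pref_cycle uf uw" and s1: "stab uf uw A \<sigma>1" and s2: "stab uf uw A \<sigma>2"
    and w0: "wval uw w0 (\<sigma>2 w0) < wval uw w0 (\<sigma>1 w0)"
  shows False
proof -
  define X where "X = {w. wval uw w (\<sigma>2 w) < wval uw w (\<sigma>1 w)}"
  have m1: "is_matching \<sigma>1" and m2: "is_matching \<sigma>2" using s1 s2 unfolding stab_def by blast+
  have stepX: "\<exists>w'. \<exists>f. \<sigma>1 w = Some f \<and> \<sigma>2 w' = Some f \<and> w' \<in> X \<and> uf f w < uf f w'" if wX: "w \<in> X" for w
  proof -
    obtain f where f: "\<sigma>1 w = Some f"
      using wX wval_nonneg[of w "\<sigma>2 w"] unfolding X_def by (cases "\<sigma>1 w") auto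
    have fA: "f \<in> A w" using s1 f unfolding stab_def by blast
    have "wval uw w (\<sigma>2 w) < uw f w" using wX f unfolding X_def by simp
    then have "uf f w \<le> fval uf \<sigma>2 f" using s2 fA unfolding stab_def by (meson not_less)
    then have "\<exists>w'. \<sigma>2 w' = Some f" using fval_none[of \<sigma>2 f] pos_f[of f w] by force
    then obtain w' where w': "\<sigma>2 w' = Some f" by blast
    have ne: "w' \<noteq> w" using w' f wX unfolding X_def by auto
    have "uf f w \<le> uf f w'" using \<open>uf f w \<le> fval uf \<sigma>2 f\<close> fval_some[OF m2 w'] by simp
    then have lt: "uf f w < uf f w'" using ne uf_eq by (metis order_le_less)
    have fA': "f \<in> A w'" using s2 w' unfolding stab_def by blast
    have "fval uf \<sigma>1 f < uf f w'" using fval_some[OF m1 f] lt by simp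
    then have le: "uw f w' \<le> wval uw w' (\<sigma>1 w')" using s1 fA' unfolding stab_def by (meson not_less)
    have "\<sigma>1 w' \<noteq> Some f" using m1 f ne unfolding is_matching_def by blast
    then have "wval uw w' (\<sigma>1 w') \<noteq> uw f w'"
      using pos_w[of f w'] uw_eq by (cases "\<sigma>1 w'") auto
    then have "w' \<in> X" using le w' unfolding X_def by simp
    then show ?thesis using f w' lt by blast
  qed
  define \<phi> where "\<phi> w = (SOME w'. \<exists>f. \<sigma>1 w = Some f \<and> \<sigma>2 w' = Some f \<and> w' \<in> X \<and> uf f w < uf f w')" for w
  have phi: "\<exists>f. \<sigma>1 w = Some f \<and> \<sigma>2 (\<phi> w) = Some f \<and> \<phi> w \<in> X \<and> uf f w < uf f (\<phi> w)" if "w \<in> X" for w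
    unfolding \<phi>_def using someI_ex[OF stepX[OF that]] .
  define ws where "ws t = (\<phi> ^^ t) w0" for t
  have ws_Suc: "ws (Suc t) = \<phi> (ws t)" for t unfolding ws_def by simp
  have wsX: "ws t \<in> X" for t
  proof (induction t)
    case 0 then show ?case using w0 unfolding ws_def X_def by simp
  next
    case (Suc t) then show ?case using phi ws_Suc by metis
  qed
  have "\<exists>a b. a < b \<and> ws a = ws b"
  proof (rule ccontr)
    assume "\<not> ?thesis"
    then have "inj_on ws {..card (UNIV :: 'w set)}"
      unfolding inj_on_def by (metis linorder_neqE_nat)
    then have "card (ws ` {..card (UNIV :: 'w set)}) = Suc (card (UNIV :: 'w set))"
      by (simp add: card_image)
    moreover have "card (ws ` {..card (UNIV :: 'w set)}) \<le> card (UNIV :: 'w set)"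
      by (rule card_mono) auto
    ultimately show False by simp
  qed
  then obtain a b where ab: "a < b" "ws a = ws b" by blast
  have exd: "\<exists>d. 0 < d \<and> (\<exists>i. ws (i + d) = ws i)"
    using ab by (intro exI[of _ "b - a"]) (auto intro!: exI[of _ a])
  define d where "d = (LEAST d. 0 < d \<and> (\<exists>i. ws (i + d) = ws i))"
  have d: "0 < d \<and> (\<exists>i. ws (i + d) = ws i)" unfolding d_def by (rule LeastI_ex[OF exd])
  have dmin: "d \<le> d'" if "0 < d'" "ws (j + d') = ws j" for d' j
    unfolding d_def by (rule Least_le) (use that in blast)
  obtain i where i: "ws (i + d) = ws i" using d by blast
  have dpos: "0 < d" using d by blast
  have per1: "ws (i + t + d) = ws (i + t)" for t
  proof (induction t)
    case 0 then show ?case using i by simp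
  next
    case (Suc t)
    have "ws (i + Suc t + d) = \<phi> (ws (i + t + d))" using ws_Suc by (metis add_Suc add_Suc_right)
    also have "\<dots> = \<phi> (ws (i + t))" using Suc by simp
    also have "\<dots> = ws (i + Suc t)" using ws_Suc by simp
    finally show ?case .
  qed
  have perq: "ws (i + r + q * d) = ws (i + r)" for q r
  proof (induction q)
    case 0 then show ?case by simp
  next
    case (Suc q)
    have "ws (i + r + Suc q * d) = ws (i + (r + q * d) + d)" by (simp add: algebra_simps)
    also have "\<dots> = ws (i + (r + q * d))" by (rule per1)
    also have "\<dots> = ws (i + r)" using Suc by (simp add: add.assoc)
    finally show ?case .
  qed
  have per: "ws (i + t) = ws (i + t mod d)" for t
    using perq[of "t mod d" "t div d"] by (metis add.assoc mod_div_mult_eq)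
  define W' where "W' t = ws (i + t)" for t
  define F' where "F' t = the (\<sigma>2 (W' t))" for t
  have pa: "\<sigma>2 (W' t) = Some (F' t)" for t
  proof -
    have "W' t = ws (Suc (i + t + d - 1))" unfolding W'_def using per1[of t] dpos by simp
    also have "\<dots> = \<phi> (ws (i + t + d - 1))" by (rule ws_Suc)
    finally have "\<exists>f. \<sigma>2 (W' t) = Some f" using phi[OF wsX] by metis
    then show ?thesis unfolding F'_def by auto
  qed
  have pb: "\<sigma>1 (W' t) = Some (F' ((t + 1) mod d))" for t
  proof -
    obtain f where f: "\<sigma>1 (W' t) = Some f" "\<sigma>2 (\<phi> (W' t)) = Some f"
      using phi[of "W' t"] wsX unfolding W'_def by blast
    have "\<phi> (W' t) = W' ((t + 1) mod d)" unfolding W'_def using ws_Suc per[of "t + 1"] by simp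
    then have "F' ((t + 1) mod d) = f" using f(2) pa by (metis option.inject)
    then show ?thesis using f(1) by simp
  qed
  have injW: "inj_on W' {..<d}"
  proof (rule inj_onI)
    fix a b assume a: "a \<in> {..<d}" "b \<in> {..<d}" "W' a = W' b"
    show "a = b"
    proof (rule ccontr)
      assume "a \<noteq> b"
      then consider "a < b" | "b < a" by linarith
      then show False
      proof cases
        case 1
        have "ws ((i + a) + (b - a)) = ws (i + a)" using a(3) 1 unfolding W'_def by simp
        then have "d \<le> b - a" using dmin[of "b - a" "i + a"] 1 by simp
        then show False using a 1 by simp
      next
        case 2
        have "ws ((i + b) + (a - b)) = ws (i + b)" using a(3) 2 unfolding W'_def by simp
        then have "d \<le> a - b" using dmin[of "a - b" "i + b"] 2 by simp
        then show False using a 2 by simp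
      qed
    qed
  qed
  have injF: "inj_on F' {..<d}"
  proof (rule inj_onI)
    fix a b assume a: "a \<in> {..<d}" "b \<in> {..<d}" "F' a = F' b"
    then have "W' a = W' b" using pa[of a] pa[of b] m2 unfolding is_matching_def by metis
    then show "a = b" using injW a by (meson inj_onD)
  qed
  have d2: "2 \<le> d"
  proof (rule ccontr)
    assume "\<not> 2 \<le> d"
    then have "d = 1" using dpos by simp
    then have "\<phi> (ws i) = ws i" using i ws_Suc by simp
    then show False using phi[OF wsX[of i]] by auto
  qed
  have cyc: "pref_cycle uf uw d F' W'"
    unfolding pref_cycle_def
  proof (intro conjI allI impI)
    show "2 \<le> d" by (rule d2)
    show "inj_on F' {..<d}" by (rule injF)
    show "inj_on W' {..<d}" by (rule injW)
  next
    fix t assume t: "t < d"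
    let ?t' = "(t + d - 1) mod d"
    have ar: "(?t' + 1) mod d = t"
    proof -
      have "(?t' + 1) mod d = (t + d - 1 + 1) mod d" by (rule mod_add_left_eq)
      also have "t + d - 1 + 1 = t + d" using dpos by simp
      finally show ?thesis using t by simp
    qed
    obtain f where f: "\<sigma>1 (W' ?t') = Some f" "\<sigma>2 (\<phi> (W' ?t')) = Some f" "uf f (W' ?t') < uf f (\<phi> (W' ?t'))"
      using phi[of "W' ?t'"] wsX unfolding W'_def by blast
    have "f = F' t" using pb[of ?t'] f(1) ar by simp
    then have "\<phi> (W' ?t') = W' t" using f(2) pa[of t] m2 unfolding is_matching_def by metis
    then show "uf (F' t) (W' ?t') < uf (F' t) (W' t)" using f(3) \<open>f = F' t\<close> by simp
    have "W' t \<in> X" unfolding W'_def using wsX by simp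
    then show "uw (F' t) (W' t) < uw (F' ((t + 1) mod d)) (W' t)"
      using pa[of t] pb[of t] unfolding X_def by simp
  qed
  then show False using nc unfolding no_pref_cycle_def by blast
qed

lemma nocyc_unique:
  assumes nc: "no_pref_cycle uf uw" and s1: "stab uf uw A \<sigma>1" and s2: "stab uf uw A \<sigma>2"
  shows "\<sigma>1 = \<sigma>2"
proof (rule ext, rule ccontr)
  fix w assume ne: "\<sigma>1 w \<noteq> \<sigma>2 w"
  have "wval uw w (\<sigma>1 w) \<noteq> wval uw w (\<sigma>2 w)"
    using ne pos_w[of "the (\<sigma>1 w)" w] pos_w[of "the (\<sigma>2 w)" w] uw_eq
    by (cases "\<sigma>1 w"; cases "\<sigma>2 w") auto
  then consider "wval uw w (\<sigma>2 w) < wval uw w (\<sigma>1 w)" | "wval uw w (\<sigma>1 w) < wval uw w (\<sigma>2 w)" by linarith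
  then show False
    by cases (use cyc_half[OF nc s1 s2] cyc_half[OF nc s2 s1] in blast)+
qed

end

context mkt begin

lemma bij_ex: "bij_betw fo {..<k} (UNIV :: 'a set) \<Longrightarrow> \<exists>j<k. fo j = x"
  unfolding bij_betw_def by (metis UNIV_I imageE lessThan_iff)

lemma bij_inj: "bij_betw fo {..<k} (UNIV :: 'a set) \<Longrightarrow> a < k \<Longrightarrow> b < k \<Longrightarrow> fo a = fo b \<Longrightarrow> a = b"
  unfolding bij_betw_def by (meson inj_onD lessThan_iff)

lemma spc_prefix:
  assumes spc: "SPC_ordering uf uw fo wo" and st: "stab uf uw A \<sigma>"
    and J: "J \<le> min (card (UNIV :: 'f set)) (card (UNIV :: 'w set))"
    and acc: "\<forall>j<J. fo j \<in> A (wo j)"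
  shows "j < J \<Longrightarrow> \<sigma> (wo j) = Some (fo j)"
proof (induction j rule: less_induct)
  case (less j)
  let ?m = "card (UNIV :: 'f set)" and ?n = "card (UNIV :: 'w set)"
  have bf: "bij_betw fo {..<?m} UNIV" and bw: "bij_betw wo {..<?n} UNIV"
    and top: "\<And>i. i < min ?m ?n \<Longrightarrow> (\<forall>j. i \<le> j \<and> j < ?n \<longrightarrow> uf (fo i) (wo j) \<le> uf (fo i) (wo i))
      \<and> (\<forall>j. i \<le> j \<and> j < ?m \<longrightarrow> uw (fo j) (wo i) \<le> uw (fo i) (wo i))"
    using spc unfolding SPC_ordering_def by blast+
  have m: "is_matching \<sigma>" using st unfolding stab_def by blast
  have jm: "j < ?m" "j < ?n" "j < min ?m ?n" using less J by auto
  show ?case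
  proof (rule ccontr)
    assume ne: "\<sigma> (wo j) \<noteq> Some (fo j)"
    have c1: "wval uw (wo j) (\<sigma> (wo j)) < uw (fo j) (wo j)"
    proof (cases "\<sigma> (wo j)")
      case None then show ?thesis using pos_w by simp
    next
      case (Some f)
      obtain k where k: "k < ?m" "fo k = f" using bij_ex[OF bf] by blast
      have "\<not> k < j"
      proof
        assume "k < j"
        then have "\<sigma> (wo k) = Some f" using less k by auto
        then have "wo k = wo j" using Some m unfolding is_matching_def by blast
        moreover have "k < ?n" using \<open>k < j\<close> jm by simp
        ultimately have "k = j" using bij_inj[OF bw, of k j] jm by blast
        then show False using \<open>k < j\<close> by simp
      qed
      moreover have "k \<noteq> j" using ne Some k by auto
      ultimately have "j \<le> k" by simp
      then have "uw f (wo j) \<le> uw (fo j) (wo j)" using top[OF jm(3)] k by blast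
      moreover have "f \<noteq> fo j" using ne Some by auto
      ultimately show ?thesis using Some uw_eq by (simp add: order_le_less)
    qed
    have c2: "fval uf \<sigma> (fo j) < uf (fo j) (wo j)"
    proof (cases "\<exists>w'. \<sigma> w' = Some (fo j)")
      case True
      then obtain w' where w': "\<sigma> w' = Some (fo j)" by blast
      obtain l where l: "l < ?n" "wo l = w'" using bij_ex[OF bw] by blast
      have "\<not> l < j"
      proof
        assume "l < j"
        then have "\<sigma> (wo l) = Some (fo l)" using less J by auto
        then have "fo l = fo j" using w' l by simp
        moreover have "l < ?m" using \<open>l < j\<close> jm by simp
        ultimately have "l = j" using bij_inj[OF bf, of l j] jm by blast
        then show False using \<open>l < j\<close> by simp
      qed
      moreover have "l \<noteq> j" using ne w' l by auto
      ultimately have "j \<le> l" by simp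
      then have "uf (fo j) w' \<le> uf (fo j) (wo j)" using top[OF jm(3)] l by blast
      moreover have "w' \<noteq> wo j" using ne w' by auto
      ultimately show ?thesis using fval_some[OF m w'] uf_eq by (simp add: order_le_less)
    next
      case False then show ?thesis using fval_none[of \<sigma> "fo j"] pos_f by auto
    qed
    show False using st acc less c1 c2 unfolding stab_def by blast
  qed
qed

lemma spc_determined:
  assumes spc: "SPC_ordering uf uw fo wo"
    and m1: "is_matching \<sigma>1" and m2: "is_matching \<sigma>2"
    and p1: "\<forall>j < min (card (UNIV :: 'f set)) (card (UNIV :: 'w set)). \<sigma>1 (wo j) = Some (fo j)"
    and p2: "\<forall>j < min (card (UNIV :: 'f set)) (card (UNIV :: 'w set)). \<sigma>2 (wo j) = Some (fo j)"
  shows "\<sigma>1 = \<sigma>2"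
proof
  let ?m = "card (UNIV :: 'f set)" and ?n = "card (UNIV :: 'w set)"
  have bf: "bij_betw fo {..<?m} UNIV" and bw: "bij_betw wo {..<?n} UNIV"
    using spc unfolding SPC_ordering_def by blast+
  have none: "\<sigma> (wo j) = None" if m: "is_matching \<sigma>" and p: "\<forall>j < min ?m ?n. \<sigma> (wo j) = Some (fo j)"
    and j: "min ?m ?n \<le> j" "j < ?n" for \<sigma> j
  proof (rule ccontr)
    assume "\<sigma> (wo j) \<noteq> None"
    then obtain f where f: "\<sigma> (wo j) = Some f" by blast
    obtain k where k: "k < ?m" "fo k = f" using bij_ex[OF bf] by blast
    show False
    proof (cases "k < min ?m ?n")
      case True
      then have "\<sigma> (wo k) = Some f" using p k by auto
      then have "wo k = wo j" using f m unfolding is_matching_def by blast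
      moreover have "k < ?n" using True by simp
      ultimately have "k = j" using bij_inj[OF bw, of k j] j by blast
      then show False using True j by simp
    next
      case False then show False using k j by simp
    qed
  qed
  fix w
  obtain j where j: "j < ?n" "wo j = w" using bij_ex[OF bw] by blast
  show "\<sigma>1 w = \<sigma>2 w"
  proof (cases "j < min ?m ?n")
    case True then show ?thesis using p1 p2 j by auto
  next
    case False then show ?thesis using none[OF m1 p1] none[OF m2 p2] j by (metis not_less)
  qed
qed

lemma stab_true: "stab uf uw (\<lambda>_. UNIV) \<sigma> \<longleftrightarrow> stable_matching uf uw \<sigma>"
  unfolding stab_def stable_matching_def using pos_f pos_w by blast

end

lemma sum_le_cmp:
  fixes \<Psi> :: "'s::finite \<Rightarrow> real"
  assumes "\<forall>\<theta>. 0 < \<Psi> \<theta>" "\<And>\<theta>. a \<theta> \<le> b \<theta>"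
  shows "(\<Sum>\<theta>\<in>UNIV. \<Psi> \<theta> * a \<theta>) \<le> (\<Sum>\<theta>\<in>UNIV. \<Psi> \<theta> * b \<theta>)"
  by (rule sum_mono) (use assms in \<open>auto intro: mult_left_mono less_imp_le\<close>)

lemma sum_less_cmp:
  fixes \<Psi> :: "'s::finite \<Rightarrow> real"
  assumes "\<forall>\<theta>. 0 < \<Psi> \<theta>" "\<And>\<theta>. a \<theta> \<le> b \<theta>" "a \<theta>0 < b \<theta>0"
  shows "(\<Sum>\<theta>\<in>UNIV. \<Psi> \<theta> * a \<theta>) < (\<Sum>\<theta>\<in>UNIV. \<Psi> \<theta> * b \<theta>)"
  by (rule sum_strict_mono_ex1) (use assms in \<open>auto intro: mult_left_mono less_imp_le\<close>)

theorem proposition2: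
  fixes \<Psi> :: "'s::finite \<Rightarrow> real"
    and uf :: "'s \<Rightarrow> 'f::finite \<Rightarrow> 'w::finite \<Rightarrow> real"
    and uw :: "'f \<Rightarrow> 'w \<Rightarrow> real"
  assumes "economy \<Psi> uf uw"
    and "(\<forall>\<theta>. no_pref_cycle (uf \<theta>) uw) \<or> SPC_star uf uw"
  shows "(\<exists>D. BNE_dropping \<Psi> uf uw D)
       \<and> (\<forall>D. BNE_dropping \<Psi> uf uw D \<longrightarrow>
              (\<forall>\<theta>. da (uf \<theta>) uw D = (THE \<mu>. stable_matching (uf \<theta>) uw \<mu>)))"
proof -
  have pos: "\<forall>\<theta>. 0 < \<Psi> \<theta>" and uniq: "\<And>\<theta>. \<exists>!\<mu>. stable_matching (uf \<theta>) uw \<mu>"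
    using assms(1) unfolding economy_def by blast+
  have M: "mkt (uf \<theta>) uw" for \<theta>
    using assms(1) unfolding economy_def by unfold_locales blast+
  have thes: "(THE \<mu>. stable_matching (uf \<theta>) uw \<mu>) = \<mu>" if "stable_matching (uf \<theta>) uw \<mu>" for \<theta> \<mu>
    using uniq[of \<theta>] that by (metis the_equality)
  have thestab: "stable_matching (uf \<theta>) uw (THE \<mu>. stable_matching (uf \<theta>) uw \<mu>)" for \<theta>
    using theI'[OF uniq[of \<theta>]] .
  define D0 where "D0 = (\<lambda>_::'w. UNIV :: 'f set)"
  have part1: "BNE_dropping \<Psi> uf uw D0"
    unfolding BNE_dropping_def exp_util_def
  proof (intro allI)
    fix w S
    have "wval uw w (da (uf \<theta>) uw (D0(w:=S)) w) \<le> wval uw w (da (uf \<theta>) uw D0 w)" for \<theta>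
    proof -
      interpret mkt "uf \<theta>" uw by (rule M)
      have e: "D0(w:=UNIV) = D0" unfolding D0_def by auto
      have "wval uw w (da (uf \<theta>) uw (D0(w:=S)) w) \<le> wval uw w (da (uf \<theta>) uw (D0(w:=UNIV)) w)"
      proof (rule trunc_lemma)
        fix \<sigma>1 \<sigma>2 assume "stab (uf \<theta>) uw (D0(w := UNIV)) \<sigma>1" "stab (uf \<theta>) uw (D0(w := UNIV)) \<sigma>2"
        then have "stable_matching (uf \<theta>) uw \<sigma>1" "stable_matching (uf \<theta>) uw \<sigma>2"
          using stab_true e unfolding D0_def by auto
        then show "\<sigma>1 = \<sigma>2" using uniq by blast
      qed
      then show ?thesis using e by simp
    qed
    then show "(\<Sum>\<theta>\<in>UNIV. \<Psi> \<theta> * wval uw w (da (uf \<theta>) uw (D0(w := S)) w))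
           \<le> (\<Sum>\<theta>\<in>UNIV. \<Psi> \<theta> * wval uw w (da (uf \<theta>) uw D0 w))"
      by (rule sum_le_cmp[OF pos])
  qed
  have part2: "da (uf \<theta>) uw D = (THE \<mu>. stable_matching (uf \<theta>) uw \<mu>)"
    if bne: "BNE_dropping \<Psi> uf uw D" for D \<theta>
proof -
    let ?m = "card (UNIV :: 'f set)" and ?n = "card (UNIV :: 'w set)"
    from assms(2) show ?thesis
    proof
      assume nc: "\<forall>\<theta>. no_pref_cycle (uf \<theta>) uw"
      have le: "wval uw w (da (uf \<theta>') uw D w) \<le> wval uw w (da (uf \<theta>') uw (D(w:=UNIV)) w)" for w \<theta>'
      proof -
        interpret mkt "uf \<theta>'" uw by (rule M)
        have "wval uw w (da (uf \<theta>') uw (D(w:=D w)) w) \<le> wval uw w (da (uf \<theta>') uw (D(w:=UNIV)) w)"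
          by (rule trunc_lemma) (use nocyc_unique nc in blast)
        then show ?thesis by simp
      qed
      have eqv: "wval uw w (da (uf \<theta>') uw D w) = wval uw w (da (uf \<theta>') uw (D(w:=UNIV)) w)" for w \<theta>'
      proof (rule ccontr)
        assume "\<not> ?thesis"
        then have lt: "wval uw w (da (uf \<theta>') uw D w) < wval uw w (da (uf \<theta>') uw (D(w:=UNIV)) w)"
          using le[of w \<theta>'] by simp
        have "exp_util \<Psi> uf uw D w < exp_util \<Psi> uf uw (D(w:=UNIV)) w"
          unfolding exp_util_def
          by (rule sum_less_cmp[of \<Psi> "\<lambda>\<theta>. wval uw w (da (uf \<theta>) uw D w)" "\<lambda>\<theta>. wval uw w (da (uf \<theta>) uw (D(w:=UNIV)) w)" \<theta>'])
             (use pos le lt in auto)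
        then show False using bne unfolding BNE_dropping_def by (meson not_less)
      qed
      interpret mkt "uf \<theta>" uw by (rule M)
      let ?\<mu> = "da (uf \<theta>) uw D"
      have s\<mu>: "stab (uf \<theta>) uw D ?\<mu>" by (rule da_stab)
      have "stable_matching (uf \<theta>) uw ?\<mu>"
        unfolding stable_matching_def
      proof (intro conjI)
        show "is_matching ?\<mu>" by (rule da_matching)
        show "\<forall>w f. ?\<mu> w = Some f \<longrightarrow> 0 < uw f w \<and> 0 < uf \<theta> f w" using pos_f pos_w by blast
        show "\<not> (\<exists>f w. wval uw w (?\<mu> w) < uw f w \<and> fval (uf \<theta>) ?\<mu> f < uf \<theta> f w)"
        proof
          assume "\<exists>f w. wval uw w (?\<mu> w) < uw f w \<and> fval (uf \<theta>) ?\<mu> f < uf \<theta> f w"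
          then obtain f w where bl: "wval uw w (?\<mu> w) < uw f w" "fval (uf \<theta>) ?\<mu> f < uf \<theta> f w" by blast
          let ?\<mu>' = "da (uf \<theta>) uw (D(w:=UNIV))"
          have s': "stab (uf \<theta>) uw (D(w:=UNIV)) ?\<mu>'" by (rule da_stab)
          have "stab (uf \<theta>) uw D ?\<mu>'"
          proof (rule stab_sub[OF s'])
            fix w' show "D w' \<subseteq> (D(w:=UNIV)) w'" by simp
          next
            fix w' g assume a: "?\<mu>' w' = Some g"
            show "g \<in> D w'"
            proof (cases "w' = w")
              case False then show ?thesis using da_acc[OF a] by simp
            next
              case True
              have "wval uw w (?\<mu> w) = uw g w" using eqv[of w \<theta>] a True by simp
              then obtain g' where g': "?\<mu> w = Some g'" "uw g' w = uw g w"
                using pos_w[of g w] by (cases "?\<mu> w") auto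
              then have "g' = g" using uw_eq by blast
              then show ?thesis using da_acc[OF g'(1)] True by simp
            qed
          qed
          then have "?\<mu>' = ?\<mu>" using nocyc_unique nc s\<mu> by blast
          then show False using s' bl unfolding stab_def by auto
        qed
      qed
      then show ?thesis using thes by simp
    next
      assume "SPC_star uf uw"
      then obtain fo wo where spc0: "\<forall>\<theta>. SPC_ordering (uf \<theta>) uw (fo \<theta>) (wo \<theta>)"
        and star0: "\<forall>\<theta> i f. i < min ?m ?n \<and> uw (fo \<theta> i) (wo \<theta> i) < uw f (wo \<theta> i)
             \<longrightarrow> (\<forall>\<theta>'. \<exists>i'<i. f = fo \<theta>' i')"
        unfolding SPC_star_def by blast
      have spc: "\<And>\<theta>. SPC_ordering (uf \<theta>) uw (fo \<theta>) (wo \<theta>)" using spc0 by blast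
      have star: "\<exists>i'<i. f = fo \<theta>' i'" if "i < min ?m ?n" "uw (fo \<theta> i) (wo \<theta> i) < uw f (wo \<theta> i)" for \<theta> i f \<theta>'
        using star0 that by blast
      have key: "i < min ?m ?n \<longrightarrow> (\<forall>\<theta>. fo \<theta> i \<in> D (wo \<theta> i))" for i
      proof (induction i rule: less_induct)
        case (less i)
        show ?case
        proof (intro impI allI)
          fix \<theta> assume im: "i < min ?m ?n"
          define w where "w = wo \<theta> i"
          define g where "g = fo \<theta> i"
          show "fo \<theta> i \<in> D (wo \<theta> i)"
          proof (rule ccontr)
            assume "\<not> ?thesis"
            then have gD: "g \<notin> D w" unfolding g_def w_def by simp
            define D' where "D' = D(w := insert g (D w))"
            have DD': "D w' \<subseteq> D' w'" for w' unfolding D'_def by auto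
            have preD: "\<sigma> (wo \<theta>' j) = Some (fo \<theta>' j)" if "stab (uf \<theta>') uw D \<sigma>" "j < i" for \<theta>' \<sigma> j
            proof -
              interpret mkt "uf \<theta>'" uw by (rule M)
              show ?thesis
                by (rule spc_prefix[OF spc that(1), of i]) (use im less that(2) in auto)
            qed
            have preD': "\<sigma> (wo \<theta>' j) = Some (fo \<theta>' j)" if "stab (uf \<theta>') uw D' \<sigma>" "j < i" for \<theta>' \<sigma> j
            proof -
              interpret mkt "uf \<theta>'" uw by (rule M)
              show ?thesis
                by (rule spc_prefix[OF spc that(1), of i]) (use im less that(2) DD' in auto)
            qed
            have better: "wval uw w (da (uf \<theta>) uw D w) < wval uw w (da (uf \<theta>) uw D' w)"
            proof -
              interpret mkt "uf \<theta>" uw by (rule M)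
              have bf: "bij_betw (fo \<theta>) {..<?m} UNIV" and bw: "bij_betw (wo \<theta>) {..<?n} UNIV"
                and top: "\<forall>j. i \<le> j \<and> j < ?m \<longrightarrow> uw (fo \<theta> j) (wo \<theta> i) \<le> uw (fo \<theta> i) (wo \<theta> i)"
                using spc[of \<theta>] im unfolding SPC_ordering_def by blast+
              have "da (uf \<theta>) uw D' (wo \<theta> i) = Some (fo \<theta> i)"
              proof (rule spc_prefix[OF spc da_stab, of "Suc i"])
                show "Suc i \<le> min ?m ?n" using im by simp
                show "\<forall>j<Suc i. fo \<theta> j \<in> D' (wo \<theta> j)"
                proof (intro allI impI)
                  fix j assume "j < Suc i"
                  then consider "j < i" | "j = i" by linarith
                  then show "fo \<theta> j \<in> D' (wo \<theta> j)"
                  proof cases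
                    case 1 then show ?thesis using less im DD' by auto
                  next
                    case 2 then show ?thesis unfolding D'_def w_def g_def by simp
                  qed
                qed
              qed simp
              then have s1: "da (uf \<theta>) uw D' w = Some g" unfolding w_def g_def .
              have "wval uw w (da (uf \<theta>) uw D w) < uw g w"
              proof (cases "da (uf \<theta>) uw D w")
                case None then show ?thesis using pos_w by simp
              next
                case (Some f)
                have "f \<noteq> g" using da_acc[OF Some] gD by blast
                obtain k where k: "k < ?m" "fo \<theta> k = f" using bij_ex[OF bf] by blast
                have "\<not> k < i"
                proof
                  assume "k < i"
                  then have "da (uf \<theta>) uw D (wo \<theta> k) = Some f" using preD[OF da_stab] k by auto
                  then have "wo \<theta> k = w" using Some da_matching unfolding is_matching_def by blast
                  then have "k = i" using bij_inj[OF bw, of k i] \<open>k < i\<close> im unfolding w_def by simp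
                  then show False using \<open>k < i\<close> by simp
                qed
                then have "i \<le> k" by simp
                then have "uw f w \<le> uw g w" using top k unfolding w_def g_def by blast
                then show ?thesis using Some \<open>f \<noteq> g\<close> uw_eq by (simp add: order_le_less)
              qed
              then show ?thesis using s1 by simp
            qed
            have noworse: "wval uw w (da (uf \<theta>') uw D w) \<le> wval uw w (da (uf \<theta>') uw D' w)" for \<theta>'
            proof -
              interpret mkt "uf \<theta>'" uw by (rule M)
              let ?\<nu> = "da (uf \<theta>') uw D" and ?\<nu>' = "da (uf \<theta>') uw D'"
              show ?thesis
              proof (cases "?\<nu>' w = Some g")
                case False
                have "stab (uf \<theta>') uw D ?\<nu>'"
                proof (rule stab_sub[OF da_stab])
                  fix w' show "D w' \<subseteq> D' w'" by (rule DD')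
                next
                  fix w' f assume a: "?\<nu>' w' = Some f"
                  show "f \<in> D w'"
                  proof (cases "w' = w")
                    case True then show ?thesis using da_acc[OF a] False a unfolding D'_def by auto
                  next
                    case False then show ?thesis using da_acc[OF a] unfolding D'_def by simp
                  qed
                qed
                then show ?thesis by (rule worker_pess)
              next
                case True
                show ?thesis
                proof (cases "?\<nu> w")
                  case None then show ?thesis using wval_nonneg by simp
                next
                  case (Some f)
                  show ?thesis
                  proof (rule ccontr)
                    assume "\<not> ?thesis"
                    then have "uw g w < uw f w" using Some True by simp
                    then obtain i'' where i'': "i'' < i" "f = fo \<theta>' i''"
                      using star[of i \<theta> f \<theta>'] im unfolding w_def g_def by blast
                    have "?\<nu> (wo \<theta>' i'') = Some f" using preD[OF da_stab i''(1)] i'' by simp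
                    then have "wo \<theta>' i'' = w" using Some da_matching unfolding is_matching_def by blast
                    moreover have "?\<nu>' (wo \<theta>' i'') = Some f" using preD'[OF da_stab i''(1)] i'' by simp
                    ultimately have "f = g" using True by simp
                    then show False using \<open>uw g w < uw f w\<close> by simp
                  qed
                qed
              qed
            qed
            have "exp_util \<Psi> uf uw D w < exp_util \<Psi> uf uw D' w"
              unfolding exp_util_def
              by (rule sum_less_cmp[of \<Psi> "\<lambda>\<theta>. wval uw w (da (uf \<theta>) uw D w)" "\<lambda>\<theta>. wval uw w (da (uf \<theta>) uw D' w)" \<theta>])
                 (use pos noworse better in auto)
            then show False using bne unfolding BNE_dropping_def D'_def by (meson not_less)
          qed
        qed
      qed
      interpret mkt "uf \<theta>" uw by (rule M)
      have p1: "\<forall>j < min ?m ?n. da (uf \<theta>) uw D (wo \<theta> j) = Some (fo \<theta> j)"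
      proof (intro allI impI)
        fix j assume j: "j < min ?m ?n"
        show "da (uf \<theta>) uw D (wo \<theta> j) = Some (fo \<theta> j)"
          by (rule spc_prefix[OF spc da_stab, of "min ?m ?n"]) (use key j in auto)
      qed
      have st: "stab (uf \<theta>) uw (\<lambda>_. UNIV) (THE \<mu>. stable_matching (uf \<theta>) uw \<mu>)"
        using thestab[of \<theta>] stab_true by blast
      have p2: "\<forall>j < min ?m ?n. (THE \<mu>. stable_matching (uf \<theta>) uw \<mu>) (wo \<theta> j) = Some (fo \<theta> j)"
      proof (intro allI impI)
        fix j assume j: "j < min ?m ?n"
        show "(THE \<mu>. stable_matching (uf \<theta>) uw \<mu>) (wo \<theta> j) = Some (fo \<theta> j)"
          by (rule spc_prefix[OF spc st, of "min ?m ?n"]) (use j in auto)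
      qed
      have m2: "is_matching (THE \<mu>. stable_matching (uf \<theta>) uw \<mu>)" using st unfolding stab_def by blast
      show ?thesis using spc_determined[OF spc da_matching m2 p1 p2] .
    qed
  qed
  show ?thesis using part1 part2 by blast
qed

end
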